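(* Let $T\in\mathbb{N}$, $\alpha\in(0,1)$, $\lambda\ge0$, $\delta\in(0,1)$, and let $\mathcal{H}=\{k/(H-1):k=0,\dots,H-1\}$ with $H\ge2$. Run the ExAUL algorithm (described in the context) with $\eta=2\gamma=\sqrt{\ln|\mathcal{H}|/T}$ against an adaptive adversary. Then with probability at least $1-\delta$, $$\mathrm{Reg}_T:=\sum_{t=1}^T\ell_t(\tau_t)-\min_{\tau\in\mathcal{H}}\sum_{t=1}^T\ell_t(\tau)\le4\sqrt{T\ln|\mathcal{H}|}+\Big(1+\sqrt{\frac{T}{\ln|\mathcal{H}|}}\Big)\ln\frac2\delta.$$
   Context: Protocol. For $t=1,\dots,T$: an adaptive adversary chooses an input $\mathbf{x}_t$ (determining a score $f_t=f(\mathbf{x}_t,G(\mathbf{x}_t))\in[0,1)$ for a fixed generator $G$ and fixed scoring function $f$) and a feedback value $c_t\in[0,1]$ for the answer $G(\mathbf{x}_t)$; these may depend on $\tau_1,\dots,\tau_{t-1}$ but not on $\tau_t$. The learner picks $\tau_t\in\mathcal{H}$; it answers if $f_t\ge\tau_t$ and outputs IDK otherwise; it observes $f_t$ and, as partial feedback, $e_t$, which equals $c_t$ when it answers. Losses: for $\tau\in\mathcal{H}$, $a_t(\tau)=\mathbf{1}(f_t<\tau)$, $d_t(\tau,\alpha)=\mathbf{1}(f_t\ge\tau)c_t-\alpha\mathbf{1}(f_t\ge\tau)+\alpha$, $\ell_t(\tau)=\frac{a_t(\tau)+\lambda d_t(\tau,\alpha)}{1+\lambda}\in[0,1]$. ExAUL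 algorithm (parameters $\eta,\gamma>0$): $w_1(\tau)=1/|\mathcal{H}|$. At round $t$: $p_t(\tau)=w_t(\tau)/\sum_{\tau'}w_t(\tau')$; draw $\tau_t\sim p_t$; observe $f_t,e_t$; let $\mathcal{H}_t(\tau')=\{\tau\in\mathcal{H}:\tau\le f_t\}$ if $f_t\ge\tau'$ and $\{\tau\in\mathcal{H}:\tau>f_t\}$ otherwise; set for all $\tau\in\mathcal{H}$ $$\tilde\ell_t(\tau)=\frac{\ell_t(\tau)\,\mathbf{1}(\tau\in\mathcal{H}_t(\tau_t))}{\gamma+\sum_{\bar\tau\in\mathcal{H}_t(\tau_t)}\mathbf{1}(\tau\in\mathcal{H}_t(\bar\tau))\,p_t(\bar\tau)};$$ update $w_{t+1}(\tau)\propto\exp(-\eta\sum_{s=1}^t\tilde\ell_s(\tau))$. *)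

theory Defs
  imports Complex_Main
begin

definition grid :: "nat \<Rightarrow> real set" where
  "grid H = (\<lambda>k. real k / real (H - 1)) ` {0..<H}"

text \<open>Loss l_t(tau) = (a_t(tau) + lam d_t(tau,alpha)) / (1 + lam), for score f and feedback c.\<close>
definition loss :: "real \<Rightarrow> real \<Rightarrow> real \<Rightarrow> real \<Rightarrow> real \<Rightarrow> real" where
  "loss lam \<alpha> f c \<tau> =
     ((if f < \<tau> then 1 else 0)
      + lam * ((if f \<ge> \<tau> then 1 else 0) * c - \<alpha> * (if f \<ge> \<tau> then 1 else 0) + \<alpha>))
     / (1 + lam)"

definition fbset :: "real set \<Rightarrow> real \<Rightarrow> real \<Rightarrow> real set" where
  "fbset Hs f \<tau>' = (if f \<ge> \<tau>' then {\<tau>\<in>Hs. \<tau> \<le> f} else {\<tau>\<in>Hs. \<tau> > f})"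

definition expw :: "real set \<Rightarrow> real \<Rightarrow> (real \<Rightarrow> real) \<Rightarrow> real \<Rightarrow> real" where
  "expw Hs \<eta> L \<tau> = exp (- \<eta> * L \<tau>) / (\<Sum>\<tau>''\<in>Hs. exp (- \<eta> * L \<tau>''))"

text \<open>Implicit-exploration loss estimate; p = current distribution, l = true loss function,
  f = score, tt = drawn threshold.\<close>
definition est_loss ::
  "real set \<Rightarrow> real \<Rightarrow> (real \<Rightarrow> real) \<Rightarrow> (real \<Rightarrow> real) \<Rightarrow> real \<Rightarrow> real \<Rightarrow> real \<Rightarrow> real" where
  "est_loss Hs \<gamma> p l f tt \<tau> =
     (if \<tau> \<in> fbset Hs f tt then
        l \<tau> / (\<gamma> + (\<Sum>\<tau>b\<in>fbset Hs f tt. (if \<tau> \<in> fbset Hs f \<tau>b then p \<tau>b else 0)))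
      else 0)"

text \<open>Cumulative estimated loss after n rounds along the threshold history h
  (h ! s is the threshold drawn at round s+1).  F and Cf give the adversary's score and
  feedback at a round as functions of the learner's previous thresholds.\<close>
primrec cumL ::
  "real set \<Rightarrow> real \<Rightarrow> real \<Rightarrow> real \<Rightarrow> real \<Rightarrow> (real list \<Rightarrow> real) \<Rightarrow> (real list \<Rightarrow> real)
   \<Rightarrow> real list \<Rightarrow> nat \<Rightarrow> real \<Rightarrow> real" where
  "cumL Hs \<eta> \<gamma> lam \<alpha> F Cf h 0 = (\<lambda>_. 0)"
| "cumL Hs \<eta> \<gamma> lam \<alpha> F Cf h (Suc n) =
     (\<lambda>\<tau>. cumL Hs \<eta> \<gamma> lam \<alpha> F Cf h n \<tau>
         + est_loss Hs \<gamma> (expw Hs \<eta> (cumL Hs \<eta> \<gamma> lam \<alpha> F Cf h n))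
             (loss lam \<alpha> (F (take n h)) (Cf (take n h))) (F (take n h)) (h ! n) \<tau>)"

definition exaul_p ::
  "real set \<Rightarrow> real \<Rightarrow> real \<Rightarrow> real \<Rightarrow> real \<Rightarrow> (real list \<Rightarrow> real) \<Rightarrow> (real list \<Rightarrow> real)
   \<Rightarrow> real list \<Rightarrow> nat \<Rightarrow> real \<Rightarrow> real" where
  "exaul_p Hs \<eta> \<gamma> lam \<alpha> F Cf h n = expw Hs \<eta> (cumL Hs \<eta> \<gamma> lam \<alpha> F Cf h n)"

definition seq_prob ::
  "real set \<Rightarrow> real \<Rightarrow> real \<Rightarrow> real \<Rightarrow> real \<Rightarrow> (real list \<Rightarrow> real) \<Rightarrow> (real list \<Rightarrow> real)
   \<Rightarrow> nat \<Rightarrow> real list \<Rightarrow> real" where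
  "seq_prob Hs \<eta> \<gamma> lam \<alpha> F Cf T h = (\<Prod>n<T. exaul_p Hs \<eta> \<gamma> lam \<alpha> F Cf h n (h ! n))"

definition regret ::
  "real set \<Rightarrow> real \<Rightarrow> real \<Rightarrow> (real list \<Rightarrow> real) \<Rightarrow> (real list \<Rightarrow> real) \<Rightarrow> nat \<Rightarrow> real list \<Rightarrow> real" where
  "regret Hs lam \<alpha> F Cf T h =
     (\<Sum>n<T. loss lam \<alpha> (F (take n h)) (Cf (take n h)) (h ! n))
     - (MIN \<tau>\<in>Hs. \<Sum>n<T. loss lam \<alpha> (F (take n h)) (Cf (take n h)) \<tau>)"

end

theory Submission
  imports Defs
begin

lemma exp_neg_quad: fixes x :: real assumes "0 \<le> x"
  shows "exp (- x) \<le> 1 - x + x^2/2"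
proof -
  let ?f = "\<lambda>x::real. 1 - x + x^2/2 - exp (- x)"
  have "?f 0 \<le> ?f x"
  proof (rule DERIV_nonneg_imp_nondecreasing[OF assms])
    fix y :: real assume "0 \<le> y" "y \<le> x"
    show "\<exists>d. (?f has_real_derivative d) (at y) \<and> 0 \<le> d"
    proof (intro exI conjI)
      show "(?f has_real_derivative (- 1 + y + exp (- y))) (at y)"
        by (auto intro!: derivative_eq_intros)
      show "0 \<le> - 1 + y + exp (- y)" using exp_ge_add_one_self[of "-y"] by linarith
    qed
  qed
  then show ?thesis by simp
qed

lemma ln_pade: fixes z :: real assumes "0 \<le> z"
  shows "2 * z / (2 + z) \<le> ln (1 + z)"
proof -
  let ?f = "\<lambda>z::real. ln (1 + z) - 2 * z / (2 + z)"
  have "?f 0 \<le> ?f z"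
  proof (rule DERIV_nonneg_imp_nondecreasing[OF assms])
    fix y :: real assume y: "0 \<le> y" "y \<le> z"
    show "\<exists>d. (?f has_real_derivative d) (at y) \<and> 0 \<le> d"
    proof (intro exI conjI)
      show "(?f has_real_derivative (1/(1+y) - 4/(2+y)^2)) (at y)"
        using y apply (auto intro!: derivative_eq_intros)
        apply (simp add: divide_simps power2_eq_square)
        done
      have a: "1+y > 0" "2+y>0" using y by auto
      have "1/(1+y) - 4/(2+y)^2 = y^2 / ((1+y)*(2+y)^2)"
        using a by (simp add: field_simps) (simp add: power2_eq_square algebra_simps)
      also have "\<dots> \<ge> 0" using y by simp
      finally show "0 \<le> 1/(1+y) - 4/(2+y)^2" .
    qed
  qed
  then show ?thesis by simp
qed

lemma key_step: fixes P l g :: real assumes "0 \<le> P" "0 \<le> l" "l \<le> 1" "0 < g"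
  shows "P * exp (2 * g * l / (g + P)) \<le> P + 2 * g * l"
proof (cases "P = 0")
  case True then show ?thesis using assms by simp
next
  case False
  then have P: "P > 0" using assms by simp
  define z where "z = 2 * g * l / P"
  have z0: "0 \<le> z" using assms P by (simp add: z_def)
  have "2 * g * l / (g + P) \<le> 2 * g * l / (P + g * l)"
  proof (rule divide_left_mono)
    show "P + g * l \<le> g + P" using assms mult_left_le[of l g] by linarith
    show "0 \<le> 2 * g * l" using assms by simp
    show "0 < (g + P) * (P + g * l)" using assms P by (intro mult_pos_pos add_pos_nonneg) auto
  qed
  also have "\<dots> = 2 * z / (2 + z)"
  proof -
    have "P + g * l > 0" using P assms by (simp add: add_pos_nonneg)
    moreover have "2 + z > 0" using z0 by simp
    ultimately show ?thesis using P by (simp add: z_def field_simps)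
  qed
  also have "\<dots> \<le> ln (1 + z)" by (rule ln_pade[OF z0])
  finally have "exp (2 * g * l / (g + P)) \<le> 1 + z"
    using z0 by (metis exp_le_cancel_iff exp_ln add_pos_nonneg zero_less_one order_trans order_refl)
  then have "P * exp (2 * g * l / (g + P)) \<le> P * (1 + z)" using P by simp
  also have "\<dots> = P + 2 * g * l" using P by (simp add: z_def field_simps)
  finally show ?thesis .
qed

lemma fbset_same: "tb \<in> fbset K f t' \<Longrightarrow> fbset K f tb = fbset K f t'"
  by (auto simp: fbset_def split: if_splits)

lemma fbset_sub: "fbset K f t' \<subseteq> K" by (auto simp: fbset_def)

lemma fbset_sym: "t \<in> K \<Longrightarrow> t' \<in> K \<Longrightarrow> t \<in> fbset K f t' \<longleftrightarrow> t' \<in> fbset K f t"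
  by (auto simp: fbset_def)

lemma fbset_self: "t \<in> K \<Longrightarrow> t \<in> fbset K f t"
  by (auto simp: fbset_def)

lemma loss_eq: "loss lam \<alpha> f c t = (if t \<le> f then lam*c/(1+lam) else (1+lam*\<alpha>)/(1+lam))"
  by (auto simp: loss_def)

lemma loss_side: "t \<in> fbset K f t' \<Longrightarrow> loss lam \<alpha> f c t = loss lam \<alpha> f c t'"
  by (auto simp: loss_eq fbset_def split: if_splits)

lemma loss_bounds: assumes "0 \<le> lam" "0 \<le> c" "c \<le> 1" "0 \<le> \<alpha>" "\<alpha> \<le> 1"
  shows "0 \<le> loss lam \<alpha> f c t" "loss lam \<alpha> f c t \<le> 1"
  using assms mult_left_le_one_le[of lam c] mult_left_le_one_le[of lam \<alpha>] by (auto simp: loss_eq field_simps)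

lemma est_simp: "est_loss K g p l f t' t =
   (if t \<in> fbset K f t' then l t / (g + sum p (fbset K f t')) else 0)"
proof -
  have "(\<Sum>tb\<in>fbset K f t'. (if t \<in> fbset K f tb then p tb else 0)) = sum p (fbset K f t')"
    if "t \<in> fbset K f t'" using that fbset_same by (intro sum.cong) auto
  then show ?thesis by (simp add: est_loss_def)
qed

lemma sum_if_sub: "finite K \<Longrightarrow> S \<subseteq> K \<Longrightarrow> (\<Sum>x\<in>K. if x \<in> S then q x else 0) = sum q S"
  by (simp add: sum.If_cases Int_absorb1 inf.absorb2)

lemma step_i:
  assumes K: "finite K" and t': "t' \<in> K" and p: "\<And>x. x \<in> K \<Longrightarrow> 0 \<le> p x" and g: "g > 0"
  shows "(\<Sum>t\<in>K. p t * est_loss K g p (loss lam \<alpha> f c) f t' t)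
     = loss lam \<alpha> f c t' - g * (loss lam \<alpha> f c t' / (g + sum p (fbset K f t')))"
proof -
  let ?S = "fbset K f t'" let ?l = "loss lam \<alpha> f c t'"
  have PS: "0 \<le> sum p ?S" by (intro sum_nonneg) (meson p fbset_sub subsetD)
  have "(\<Sum>t\<in>K. p t * est_loss K g p (loss lam \<alpha> f c) f t' t)
      = (\<Sum>t\<in>K. if t \<in> ?S then p t * (?l / (g + sum p ?S)) else 0)"
    by (intro sum.cong) (auto simp: est_simp loss_side)
  also have "\<dots> = (\<Sum>t\<in>?S. p t * (?l / (g + sum p ?S)))"
    by (rule sum_if_sub[OF K fbset_sub])
  also have "\<dots> = sum p ?S * (?l / (g + sum p ?S))" by (rule sum_distrib_right[symmetric])
  also have "\<dots> = ?l - g * (?l / (g + sum p ?S))" using PS g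
    by (simp add: field_simps)
  finally show ?thesis .
qed

lemma step_ii:
  assumes K: "finite K" and t': "t' \<in> K" and p: "\<And>x. x \<in> K \<Longrightarrow> 0 \<le> p x" and g: "g > 0"
    and l0: "0 \<le> loss lam \<alpha> f c t'" and l1: "loss lam \<alpha> f c t' \<le> 1"
  shows "(\<Sum>t\<in>K. p t * (est_loss K g p (loss lam \<alpha> f c) f t' t)^2)
     \<le> loss lam \<alpha> f c t' / (g + sum p (fbset K f t'))"
proof -
  let ?S = "fbset K f t'" let ?l = "loss lam \<alpha> f c t'"
  define x where "x = ?l / (g + sum p ?S)"
  have PS: "0 \<le> sum p ?S" by (intro sum_nonneg) (meson p fbset_sub subsetD)
  have x0: "0 \<le> x" using PS g l0 by (simp add: x_def)
  have "(\<Sum>t\<in>K. p t * (est_loss K g p (loss lam \<alpha> f c) f t' t)^2)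
      = (\<Sum>t\<in>K. if t \<in> ?S then p t * x^2 else 0)"
    by (intro sum.cong) (auto simp: est_simp loss_side x_def)
  also have "\<dots> = (\<Sum>t\<in>?S. p t * x^2)"
    by (rule sum_if_sub[OF K fbset_sub])
  also have "\<dots> = sum p ?S * x^2" by (rule sum_distrib_right[symmetric])
  also have "\<dots> = (sum p ?S * x) * x" by (simp add: power2_eq_square)
  also have "\<dots> \<le> 1 * x"
  proof (rule mult_right_mono[OF _ x0])
    have "sum p ?S * ?l \<le> sum p ?S" using PS l1 mult_left_le by blast
    also have "\<dots> \<le> g + sum p ?S" using g by simp
    finally show "sum p ?S * x \<le> 1" using PS g by (simp add: x_def field_simps)
  qed
  finally show ?thesis by (simp add: x_def)
qed

lemma step_iii:
  assumes K: "finite K" and t: "t \<in> K" and p: "\<And>x. x \<in> K \<Longrightarrow> 0 \<le> p x" and g: "g > 0"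
    and p1: "sum p K = 1"
    and l0: "0 \<le> loss lam \<alpha> f c t" and l1: "loss lam \<alpha> f c t \<le> 1"
  shows "(\<Sum>t'\<in>K. p t' * exp (2 * g * (est_loss K g p (loss lam \<alpha> f c) f t' t - loss lam \<alpha> f c t))) \<le> 1"
proof -
  let ?S = "fbset K f t" let ?l = "loss lam \<alpha> f c t" let ?P = "sum p ?S"
  define E0 where "E0 = exp (- (2 * g * ?l))"
  define E1 where "E1 = exp (2 * g * (?l / (g + ?P) - ?l))"
  have PS: "0 \<le> ?P" by (intro sum_nonneg) (meson p fbset_sub subsetD)
  have E1: "E1 = exp (2 * g * ?l / (g + ?P)) * E0"
  proof -
    have "E1 = exp (2 * g * ?l / (g + ?P) + - (2 * g * ?l))" by (simp add: E1_def right_diff_distrib)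
    then show ?thesis unfolding E0_def by (simp only: exp_add)
  qed
  have "(\<Sum>t'\<in>K. p t' * exp (2 * g * (est_loss K g p (loss lam \<alpha> f c) f t' t - ?l)))
      = (\<Sum>t'\<in>K. if t' \<in> ?S then p t' * E1 else p t' * E0)"
  proof (intro sum.cong refl)
    fix t' assume t': "t' \<in> K"
    show "p t' * exp (2 * g * (est_loss K g p (loss lam \<alpha> f c) f t' t - ?l))
       = (if t' \<in> ?S then p t' * E1 else p t' * E0)"
      using fbset_sym[OF t t', of f] fbset_same[of t K f t'] t t'
      by (auto simp: est_simp E1_def E0_def)
  qed
  also have "\<dots> = ?P * E1 + sum p (K - ?S) * E0"
    using K fbset_sub[of K f t] by (simp add: sum.If_cases sum_distrib_right Int_absorb1 inf.absorb2 Diff_eq)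
  also have "\<dots> = E0 * (?P * exp (2 * g * ?l / (g + ?P)) + (1 - ?P))"
    using K fbset_sub[of K f t] p1 by (simp add: E1 sum_diff algebra_simps)
  also have "\<dots> \<le> E0 * (1 + 2 * g * ?l)"
    using key_step[OF PS l0 l1 g] by (intro mult_left_mono) (auto simp: E0_def)
  also have "\<dots> \<le> E0 * exp (2 * g * ?l)"
    by (intro mult_left_mono) (auto simp: E0_def)
  also have "\<dots> = 1" by (simp add: E0_def exp_minus field_simps)
  finally show ?thesis .
qed

definition Ls :: "real \<Rightarrow> real \<Rightarrow> real \<Rightarrow> real" where
  "Ls lam \<alpha> c = lam*c/(1+lam) + (1+lam*\<alpha>)/(1+lam)"

lemma step_iv:
  assumes K: "finite K" and p: "\<And>x. x \<in> K \<Longrightarrow> 0 \<le> p x" and g: "g > 0"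
    and p1: "sum p K = 1"
    and lam: "0 \<le> lam" and c: "0 \<le> c" "c \<le> 1" and al: "0 \<le> \<alpha>" "\<alpha> \<le> 1"
  shows "(\<Sum>t'\<in>K. p t' * exp (2 * g * (loss lam \<alpha> f c t' / (g + sum p (fbset K f t')) - Ls lam \<alpha> c))) \<le> 1"
proof -
  define A where "A = {x\<in>K. x \<le> f}"
  define B where "B = {x\<in>K. \<not> x \<le> f}"
  define lA where "lA = lam*c/(1+lam)"
  define lB where "lB = (1+lam*\<alpha>)/(1+lam)"
  define E where "E = exp (- (2 * g * Ls lam \<alpha> c))"
  have lAB: "0 \<le> lA" "lA \<le> 1" "0 \<le> lB" "lB \<le> 1"
    using loss_bounds[OF lam c al, of f 0] loss_bounds[OF lam c al, of f 1]
    using loss_bounds[OF lam c al, of 1 0] loss_bounds[OF lam c al, of 0 1]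
    by (auto simp: lA_def lB_def loss_eq)
  have PA: "0 \<le> sum p A" using p by (intro sum_nonneg) (auto simp: A_def)
  have PB: "0 \<le> sum p B" using p by (intro sum_nonneg) (auto simp: B_def)
  have AB: "sum p A + sum p B = 1"
  proof -
    have "K = A \<union> B" "A \<inter> B = {}" by (auto simp: A_def B_def)
    then show ?thesis using p1 K by (metis finite_Un sum.union_disjoint)
  qed
  have "(\<Sum>t'\<in>K. p t' * exp (2 * g * (loss lam \<alpha> f c t' / (g + sum p (fbset K f t')) - Ls lam \<alpha> c)))
      = (\<Sum>t'\<in>K. if t' \<in> A then p t' * (exp (2 * g * lA / (g + sum p A)) * E)
                  else p t' * (exp (2 * g * lB / (g + sum p B)) * E))"
  proof (intro sum.cong refl)
    fix t' assume t': "t' \<in> K"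
    have fA: "fbset K f t' = A" if "t' \<le> f" using that by (auto simp: fbset_def A_def)
    have fB: "fbset K f t' = B" if "\<not> t' \<le> f" using that by (auto simp: fbset_def B_def)
    show "p t' * exp (2 * g * (loss lam \<alpha> f c t' / (g + sum p (fbset K f t')) - Ls lam \<alpha> c))
      = (if t' \<in> A then p t' * (exp (2 * g * lA / (g + sum p A)) * E)
                  else p t' * (exp (2 * g * lB / (g + sum p B)) * E))"
    proof -
      have ex: "\<And>x. exp (2 * g * (x - Ls lam \<alpha> c)) = exp (2*g*x) * E"
        by (simp add: E_def mult_exp_exp right_diff_distrib)
      show ?thesis
      proof (cases "t' \<le> f")
        case True
        then have "t' \<in> A" "loss lam \<alpha> f c t' = lA" using t' by (auto simp: A_def loss_eq lA_def)
        then show ?thesis using True fA ex by simp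
      next
        case False
        then have "t' \<notin> A" "loss lam \<alpha> f c t' = lB" using t' by (auto simp: A_def loss_eq lB_def)
        then show ?thesis using False fB ex by simp
      qed
    qed
  qed
  also have "\<dots> = E * (sum p A * exp (2 * g * lA / (g + sum p A)) + sum p B * exp (2 * g * lB / (g + sum p B)))"
  proof -
    have KA: "K \<inter> - A = B" "K \<inter> A = A" by (auto simp: A_def B_def)
    let ?CA = "exp (2 * g * lA / (g + sum p A)) * E" let ?CB = "exp (2 * g * lB / (g + sum p B)) * E"
    have "(\<Sum>t'\<in>K. if t' \<in> A then p t' * ?CA else p t' * ?CB) = (\<Sum>t'\<in>A. p t' * ?CA) + (\<Sum>t'\<in>B. p t' * ?CB)"
      using K by (simp add: sum.If_cases KA)
    also have "\<dots> = sum p A * ?CA + sum p B * ?CB" by (simp add: sum_distrib_right)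
    finally show ?thesis by (simp add: algebra_simps)
  qed
  also have "\<dots> \<le> E * ((sum p A + 2 * g * lA) + (sum p B + 2 * g * lB))"
    using key_step[OF PA lAB(1,2) g] key_step[OF PB lAB(3,4) g]
    by (intro mult_left_mono add_mono) (auto simp: E_def)
  also have "\<dots> = E * (1 + 2 * g * Ls lam \<alpha> c)"
  proof -
    have "E * ((sum p A + 2 * g * lA) + (sum p B + 2 * g * lB)) = E * ((sum p A + sum p B) + 2 * g * (lA + lB))"
      by (simp add: algebra_simps)
    then show ?thesis using AB by (simp add: Ls_def lA_def lB_def)
  qed
  also have "\<dots> \<le> E * exp (2 * g * Ls lam \<alpha> c)"
    by (intro mult_left_mono) (auto simp: E_def)
  also have "\<dots> = 1" by (simp add: E_def exp_minus field_simps)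
  finally show ?thesis .
qed

lemma cumL_take: "n \<le> m \<Longrightarrow> m \<le> length h \<Longrightarrow>
   cumL Hs \<eta> \<gamma> lam \<alpha> F Cf (take m h) n = cumL Hs \<eta> \<gamma> lam \<alpha> F Cf h n"
  by (induction n) (auto simp: min_def)

lemma exaul_p_take: "n \<le> m \<Longrightarrow> m \<le> length h \<Longrightarrow>
   exaul_p Hs \<eta> \<gamma> lam \<alpha> F Cf (take m h) n = exaul_p Hs \<eta> \<gamma> lam \<alpha> F Cf h n"
  by (simp add: exaul_p_def cumL_take)

lemma exaul_p_snoc: "n \<le> length h \<Longrightarrow>
   exaul_p Hs \<eta> \<gamma> lam \<alpha> F Cf (h @ [t]) n = exaul_p Hs \<eta> \<gamma> lam \<alpha> F Cf h n"
proof -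
  assume n: "n \<le> length h"
  have "exaul_p Hs \<eta> \<gamma> lam \<alpha> F Cf (h @ [t]) n = exaul_p Hs \<eta> \<gamma> lam \<alpha> F Cf (take n (h @ [t])) n"
    using n by (intro exaul_p_take[symmetric]) auto
  also have "take n (h @ [t]) = take n h" using n by simp
  also have "exaul_p Hs \<eta> \<gamma> lam \<alpha> F Cf (take n h) n = exaul_p Hs \<eta> \<gamma> lam \<alpha> F Cf h n"
    using n by (simp add: exaul_p_take)
  finally show ?thesis .
qed

definition seqs :: "real set \<Rightarrow> nat \<Rightarrow> real list set" where
  "seqs K n = {h. set h \<subseteq> K \<and> length h = n}"

lemma finite_seqs: "finite K \<Longrightarrow> finite (seqs K n)"
  unfolding seqs_def by (rule finite_lists_length_eq)

lemma seqs_0: "seqs K 0 = {[]}" by (auto simp: seqs_def)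

lemma seqs_Suc: "seqs K (Suc n) = (\<lambda>(h, t). h @ [t]) ` (seqs K n \<times> K)"
proof
  show "seqs K (Suc n) \<subseteq> (\<lambda>(h, t). h @ [t]) ` (seqs K n \<times> K)"
  proof
    fix x assume x: "x \<in> seqs K (Suc n)"
    then have "x \<noteq> []" by (auto simp: seqs_def)
    then have "x = butlast x @ [last x]" by simp
    moreover have "butlast x \<in> seqs K n" "last x \<in> K" using x \<open>x \<noteq> []\<close>
      by (auto simp: seqs_def dest: in_set_butlastD)
    ultimately show "x \<in> (\<lambda>(h, t). h @ [t]) ` (seqs K n \<times> K)" by force
  qed
qed (auto simp: seqs_def)

lemma sum_seqs_Suc: assumes "finite K"
  shows "(\<Sum>h\<in>seqs K (Suc n). g h) = (\<Sum>h\<in>seqs K n. \<Sum>t\<in>K. g (h @ [t]))"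
proof -
  have inj: "inj_on (\<lambda>(h, t). h @ [t]) (seqs K n \<times> K)"
    by (auto simp: inj_on_def)
  have "(\<Sum>h\<in>seqs K (Suc n). g h) = (\<Sum>x\<in>seqs K n \<times> K. g ((\<lambda>(h, t). h @ [t]) x))"
    unfolding seqs_Suc by (rule sum.reindex[OF inj, unfolded comp_def])
  also have "\<dots> = (\<Sum>h\<in>seqs K n. \<Sum>t\<in>K. g (h @ [t]))"
    by (subst sum.cartesian_product) (simp add: case_prod_beta)
  finally show ?thesis .
qed

lemma seq_prob_snoc: "length h = n \<Longrightarrow>
  seq_prob Hs \<eta> \<gamma> lam \<alpha> F Cf (Suc n) (h @ [t]) = seq_prob Hs \<eta> \<gamma> lam \<alpha> F Cf n h * exaul_p Hs \<eta> \<gamma> lam \<alpha> F Cf h n t"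
proof -
  assume n: "length h = n"
  have "(\<Prod>k<n. exaul_p Hs \<eta> \<gamma> lam \<alpha> F Cf (h @ [t]) k ((h @ [t]) ! k))
      = (\<Prod>k<n. exaul_p Hs \<eta> \<gamma> lam \<alpha> F Cf h k (h ! k))"
    using n by (intro prod.cong) (auto simp: exaul_p_snoc nth_append)
  then show ?thesis using n by (simp add: seq_prob_def exaul_p_snoc nth_append)
qed

lemma expw_nonneg: "0 \<le> expw K \<eta> L t"
  by (simp add: expw_def sum_nonneg)

lemma expw_sum: "finite K \<Longrightarrow> K \<noteq> {} \<Longrightarrow> sum (expw K \<eta> L) K = 1"
proof -
  assume K: "finite K" "K \<noteq> {}"
  have "(\<Sum>t\<in>K. exp (- \<eta> * L t)) > 0" using K by (intro sum_pos) auto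
  then show ?thesis by (simp add: expw_def sum_divide_distrib[symmetric])
qed

lemma exaul_p_nonneg: "0 \<le> exaul_p Hs \<eta> \<gamma> lam \<alpha> F Cf h n t"
  by (simp add: exaul_p_def expw_nonneg)

lemma exaul_p_sum: "finite K \<Longrightarrow> K \<noteq> {} \<Longrightarrow> sum (exaul_p K \<eta> \<gamma> lam \<alpha> F Cf h n) K = 1"
  by (simp add: exaul_p_def expw_sum)

lemma seq_prob_nonneg: "0 \<le> seq_prob Hs \<eta> \<gamma> lam \<alpha> F Cf n h"
  by (simp add: seq_prob_def prod_nonneg exaul_p_nonneg)

lemma seq_prob_total: assumes K: "finite K" "K \<noteq> {}"
  shows "(\<Sum>h\<in>seqs K T. seq_prob K \<eta> \<gamma> lam \<alpha> F Cf T h) = 1"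
proof (induction T)
  case 0 then show ?case by (simp add: seqs_0 seq_prob_def)
next
  case (Suc T)
  have "(\<Sum>h\<in>seqs K (Suc T). seq_prob K \<eta> \<gamma> lam \<alpha> F Cf (Suc T) h)
    = (\<Sum>h\<in>seqs K T. \<Sum>t\<in>K. seq_prob K \<eta> \<gamma> lam \<alpha> F Cf T h * exaul_p K \<eta> \<gamma> lam \<alpha> F Cf h T t)"
    unfolding sum_seqs_Suc[OF K(1)] by (intro sum.cong refl) (simp add: seq_prob_snoc seqs_def)
  also have "\<dots> = (\<Sum>h\<in>seqs K T. seq_prob K \<eta> \<gamma> lam \<alpha> F Cf T h)"
    by (simp add: sum_distrib_left[symmetric] exaul_p_sum[OF K])
  finally show ?case using Suc by simp
qed

lemma tower: assumes K: "finite K"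
  and hZ: "\<And>n h. set h \<subseteq> K \<Longrightarrow> length h = n \<Longrightarrow>
      (\<Sum>t\<in>K. exaul_p K \<eta> \<gamma> lam \<alpha> F Cf h n t * exp (Z n h t)) \<le> 1"
  shows "(\<Sum>h\<in>seqs K T. seq_prob K \<eta> \<gamma> lam \<alpha> F Cf T h * exp (\<Sum>n<T. Z n (take n h) (h ! n))) \<le> 1"
proof (induction T)
  case 0 then show ?case by (simp add: seqs_0 seq_prob_def)
next
  case (Suc T)
  let ?sp = "seq_prob K \<eta> \<gamma> lam \<alpha> F Cf" let ?p = "exaul_p K \<eta> \<gamma> lam \<alpha> F Cf"
  let ?E = "\<lambda>h. exp (\<Sum>n<T. Z n (take n h) (h ! n))"
  have "(\<Sum>h\<in>seqs K (Suc T). ?sp (Suc T) h * exp (\<Sum>n<Suc T. Z n (take n h) (h ! n)))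
    = (\<Sum>h\<in>seqs K T. \<Sum>t\<in>K. ?sp (Suc T) (h @ [t]) * exp (\<Sum>n<Suc T. Z n (take n (h @ [t])) ((h @ [t]) ! n)))"
    by (rule sum_seqs_Suc[OF K])
  also have "\<dots> = (\<Sum>h\<in>seqs K T. ?sp T h * ?E h * (\<Sum>t\<in>K. ?p h T t * exp (Z T h t)))"
  proof (intro sum.cong refl)
    fix h assume h: "h \<in> seqs K T"
    then have lh: "length h = T" by (simp add: seqs_def)
    have "(\<Sum>n<Suc T. Z n (take n (h @ [t])) ((h @ [t]) ! n)) = (\<Sum>n<T. Z n (take n h) (h ! n)) + Z T h t" for t
    proof -
      have "(\<Sum>n<T. Z n (take n (h @ [t])) ((h @ [t]) ! n)) = (\<Sum>n<T. Z n (take n h) (h ! n))"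
        using lh by (intro sum.cong) (auto simp: nth_append)
      then show ?thesis using lh by (simp add: nth_append)
    qed
    then show "(\<Sum>t\<in>K. ?sp (Suc T) (h @ [t]) * exp (\<Sum>n<Suc T. Z n (take n (h @ [t])) ((h @ [t]) ! n)))
      = ?sp T h * ?E h * (\<Sum>t\<in>K. ?p h T t * exp (Z T h t))"
      using lh by (simp add: seq_prob_snoc exp_add sum_distrib_left algebra_simps)
  qed
  also have "\<dots> \<le> (\<Sum>h\<in>seqs K T. ?sp T h * ?E h * 1)"
    by (intro sum_mono mult_left_mono hZ) (auto simp: seqs_def seq_prob_nonneg)
  finally show ?case using Suc by simp
qed

lemma hedge:
  fixes K :: "real set" and h :: "real list" and \<eta> \<gamma> lam \<alpha> :: real and F Cf :: "real list \<Rightarrow> real"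
  defines "Lc \<equiv> \<lambda>n. cumL K \<eta> \<gamma> lam \<alpha> F Cf h n"
  defines "p \<equiv> \<lambda>n. expw K \<eta> (Lc n)"
  defines "e \<equiv> \<lambda>n t. est_loss K \<gamma> (p n) (loss lam \<alpha> (F (take n h)) (Cf (take n h))) (F (take n h)) (h ! n) t"
  assumes K: "finite K" "K \<noteq> {}" and eta: "\<eta> > 0" and e0: "\<And>n t. t \<in> K \<Longrightarrow> 0 \<le> e n t"
    and t0: "t0 \<in> K"
  shows "\<eta> * (\<Sum>n<T. \<Sum>t\<in>K. p n t * e n t) \<le> ln (real (card K)) + \<eta> * (\<Sum>n<T. e n t0)
           + \<eta>^2/2 * (\<Sum>n<T. \<Sum>t\<in>K. p n t * (e n t)^2)"
proof -
  define W where "W n = (\<Sum>t\<in>K. exp (- \<eta> * Lc n t))" for n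
  define a where "a n = (\<Sum>t\<in>K. p n t * e n t)" for n
  define b where "b n = (\<Sum>t\<in>K. p n t * (e n t)^2)" for n
  have LcS: "Lc (Suc n) t = Lc n t + e n t" for n t
    by (simp add: Lc_def e_def p_def)
  have Wpos: "W n > 0" for n using K by (simp add: W_def sum_pos)
  have pW: "exp (- (\<eta> * Lc n t)) = W n * p n t" for n t
    using Wpos[of n] unfolding p_def expw_def W_def by simp
  have psum: "sum (p n) K = 1" for n using K by (simp add: p_def expw_sum)
  have step: "W (Suc n) \<le> W n * exp (- \<eta> * a n + \<eta>^2/2 * b n)" for n
  proof -
    have "W (Suc n) = (\<Sum>t\<in>K. exp (- \<eta> * Lc n t) * exp (- (\<eta> * e n t)))"
      by (simp add: W_def LcS exp_add[symmetric] algebra_simps)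
    also have "\<dots> \<le> (\<Sum>t\<in>K. exp (- \<eta> * Lc n t) * (1 - \<eta> * e n t + (\<eta> * e n t)^2/2))"
      using eta e0 by (intro sum_mono mult_left_mono exp_neg_quad) auto
    also have "\<dots> = (\<Sum>t\<in>K. W n * (p n t - \<eta> * (p n t * e n t) + \<eta>^2/2 * (p n t * (e n t)^2)))"
      by (intro sum.cong refl) (simp add: pW algebra_simps power_mult_distrib)
    also have "\<dots> = W n * (sum (p n) K - \<eta> * a n + \<eta>^2/2 * b n)"
      unfolding a_def b_def by (simp add: sum_distrib_left sum_subtractf sum.distrib sum_divide_distrib algebra_simps)
    also have "\<dots> = W n * (1 + (- \<eta> * a n + \<eta>^2/2 * b n))" by (simp add: psum)
    also have "\<dots> \<le> W n * exp (- \<eta> * a n + \<eta>^2/2 * b n)"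
      using Wpos[of n] by (intro mult_left_mono exp_ge_add_one_self) auto
    finally show ?thesis .
  qed
  have Wb: "W n \<le> real (card K) * exp (\<Sum>m<n. - \<eta> * a m + \<eta>^2/2 * b m)" for n
  proof (induction n)
    case 0 then show ?case by (simp add: W_def Lc_def)
  next
    case (Suc n)
    have "W (Suc n) \<le> W n * exp (- \<eta> * a n + \<eta>^2/2 * b n)" by (rule step)
    also have "\<dots> \<le> real (card K) * exp (\<Sum>m<n. - \<eta> * a m + \<eta>^2/2 * b m) * exp (- \<eta> * a n + \<eta>^2/2 * b n)"
      using Suc by (intro mult_right_mono) auto
    also have "\<dots> = real (card K) * exp ((\<Sum>m<n. - \<eta> * a m + \<eta>^2/2 * b m) + (- \<eta> * a n + \<eta>^2/2 * b n))"
      by (simp only: exp_add mult.assoc)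
    finally show ?case by simp
  qed
  have LcT: "Lc n t0 = (\<Sum>m<n. e m t0)" for n
    by (induction n) (simp_all add: LcS, simp add: Lc_def)
  have "exp (- \<eta> * Lc T t0) \<le> W T"
    unfolding W_def using K t0 by (intro member_le_sum) auto
  also note Wb[of T]
  finally have "exp (- \<eta> * Lc T t0) \<le> real (card K) * exp (\<Sum>m<T. - \<eta> * a m + \<eta>^2/2 * b m)" .
  then have "- \<eta> * Lc T t0 \<le> ln (real (card K) * exp (\<Sum>m<T. - \<eta> * a m + \<eta>^2/2 * b m))"
    using K by (subst ln_ge_iff) (auto simp: card_gt_0_iff)
  also have "\<dots> = ln (real (card K)) + (\<Sum>m<T. - \<eta> * a m + \<eta>^2/2 * b m)"
    using K by (simp add: ln_mult card_gt_0_iff)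
  also have "(\<Sum>m<T. - \<eta> * a m + \<eta>^2/2 * b m) = - \<eta> * (\<Sum>m<T. a m) + \<eta>^2/2 * (\<Sum>m<T. b m)"
    by (subst sum.distrib) (simp add: sum_distrib_left)
  finally have "- \<eta> * (\<Sum>m<T. e m t0) \<le> ln (real (card K)) + (- \<eta> * (\<Sum>m<T. a m) + \<eta>^2/2 * (\<Sum>m<T. b m))"
    by (simp add: LcT)
  then show ?thesis unfolding a_def b_def by linarith
qed

lemma est_nonneg:
  assumes "g > 0" "\<And>x. x \<in> K \<Longrightarrow> 0 \<le> p x" "\<And>t. 0 \<le> l t"
  shows "0 \<le> est_loss K g p l f t' t"
proof -
  have "0 \<le> sum p (fbset K f t')" by (intro sum_nonneg) (meson assms(2) fbset_sub subsetD)
  then show ?thesis using assms by (simp add: est_simp)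
qed

lemma bound_arith:
  fixes T lk ld \<eta> :: real
  assumes T: "T > 0" and lk: "lk > 0" and eta: "\<eta> = sqrt (lk / T)"
  shows "2 * lk / \<eta> + 2 * T * \<eta> + ld / \<eta> + ld = 4 * sqrt (T * lk) + (1 + sqrt (T / lk)) * ld"
proof -
  have s1: "lk / \<eta> = sqrt (T * lk)"
    using T lk by (simp add: eta real_sqrt_divide real_sqrt_mult field_simps)
  have s2: "T * \<eta> = sqrt (T * lk)"
    using T lk by (simp add: eta real_sqrt_divide real_sqrt_mult field_simps)
  have s3: "1 / \<eta> = sqrt (T / lk)"
    using T lk by (simp add: eta real_sqrt_divide)
  have "2 * lk / \<eta> + 2 * T * \<eta> + ld / \<eta> + ld = 2 * (lk / \<eta>) + 2 * (T * \<eta>) + (1 / \<eta>) * ld + ld"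
    by simp
  also have "\<dots> = 4 * sqrt (T * lk) + (1 + sqrt (T / lk)) * ld" by (simp add: s1 s2 s3 algebra_simps)
  finally show ?thesis .
qed

lemma Ls_le2: assumes "0 \<le> lam" "0 \<le> c" "c \<le> 1" "0 \<le> \<alpha>" "\<alpha> \<le> 1" shows "Ls lam \<alpha> c \<le> 2"
proof -
  have "Ls lam \<alpha> c = loss lam \<alpha> 0 c 0 + loss lam \<alpha> 0 c 1" by (simp add: Ls_def loss_eq)
  then show ?thesis using loss_bounds[OF assms, of 0 0] loss_bounds[OF assms, of 0 1] by linarith
qed

lemma main_bound:
  fixes K :: "real set" and T :: nat and lam \<alpha> \<delta> \<eta> \<gamma> :: real and F Cf :: "real list \<Rightarrow> real"
  assumes K: "finite K" "2 \<le> card K" and T: "T > 0" and del: "0 < \<delta>" "\<delta> < 1"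
    and lam: "0 \<le> lam" and al: "0 \<le> \<alpha>" "\<alpha> \<le> 1"
    and adv: "\<And>h. set h \<subseteq> K \<Longrightarrow> 0 \<le> Cf h \<and> Cf h \<le> 1"
    and eta: "\<eta> = sqrt (ln (real (card K)) / real T)" and gam: "\<eta> = 2 * \<gamma>"
  shows "(\<Sum>h\<in>{h. set h \<subseteq> K \<and> length h = T}.
            if regret K lam \<alpha> F Cf T h
               \<le> 4 * sqrt (real T * ln (real (card K)))
                 + (1 + sqrt (real T / ln (real (card K)))) * ln (2 / \<delta>)
            then seq_prob K \<eta> \<gamma> lam \<alpha> F Cf T h
            else 0) \<ge> 1 - \<delta>"
proof -
  have Kne: "K \<noteq> {}" using K by auto
  define lk where "lk = ln (real (card K))"
  have lk: "lk > 0" using K by (simp add: lk_def)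
  have eta0: "\<eta> > 0" using lk T by (simp add: eta lk_def[symmetric])
  have g0: "\<gamma> > 0" using eta0 gam by simp
  define ld where "ld = ln (2 / \<delta>)"
  define B where "B = 4 * sqrt (real T * lk) + (1 + sqrt (real T / lk)) * ld"
  define sp where "sp = seq_prob K \<eta> \<gamma> lam \<alpha> F Cf T"
  define P where "P = exaul_p K \<eta> \<gamma> lam \<alpha> F Cf"
  define Zt where "Zt \<tau> n h' t' = 2*\<gamma>*(est_loss K \<gamma> (P h' n) (loss lam \<alpha> (F h') (Cf h')) (F h') t' \<tau>
       - loss lam \<alpha> (F h') (Cf h') \<tau>)" for \<tau> n h' t'
  define Zg where "Zg n h' t' = 2*\<gamma>*(loss lam \<alpha> (F h') (Cf h') t' / (\<gamma> + sum (P h' n) (fbset K (F h') t'))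
       - Ls lam \<alpha> (Cf h'))" for n h' t'
  define Xt where "Xt \<tau> h = (\<Sum>n<T. Zt \<tau> n (take n h) (h!n))" for \<tau> h
  define Xg where "Xg h = (\<Sum>n<T. Zg n (take n h) (h!n))" for h
  define Y where "Y h = (1/2) * (1/real (card K)) * (\<Sum>\<tau>\<in>K. exp (Xt \<tau> h)) + (1/2) * exp (Xg h)" for h
  have Et: "(\<Sum>h\<in>seqs K T. sp h * exp (Xt \<tau> h)) \<le> 1" if \<tau>: "\<tau> \<in> K" for \<tau>
    unfolding Xt_def sp_def
  proof (rule tower[OF K(1), where Z = "Zt \<tau>"])
    fix n h' assume h': "set h' \<subseteq> K" "length h' = n"
    have c: "0 \<le> Cf h'" "Cf h' \<le> 1" using adv[OF h'(1)] by auto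
    show "(\<Sum>t\<in>K. exaul_p K \<eta> \<gamma> lam \<alpha> F Cf h' n t * exp (Zt \<tau> n h' t)) \<le> 1"
      unfolding Zt_def P_def
      by (rule step_iii[OF K(1) \<tau> exaul_p_nonneg g0 exaul_p_sum[OF K(1) Kne] loss_bounds[OF lam c al]])
  qed
  have Eg: "(\<Sum>h\<in>seqs K T. sp h * exp (Xg h)) \<le> 1"
    unfolding Xg_def sp_def
  proof (rule tower[OF K(1), where Z = "Zg"])
    fix n h' assume h': "set h' \<subseteq> K" "length h' = n"
    have c: "0 \<le> Cf h'" "Cf h' \<le> 1" using adv[OF h'(1)] by auto
    show "(\<Sum>t\<in>K. exaul_p K \<eta> \<gamma> lam \<alpha> F Cf h' n t * exp (Zg n h' t)) \<le> 1"
      unfolding Zg_def P_def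
      by (rule step_iv[OF K(1) exaul_p_nonneg g0 exaul_p_sum[OF K(1) Kne] lam c al])
  qed
  have cardK: "real (card K) > 0" using K by simp
  have EY: "(\<Sum>h\<in>seqs K T. sp h * Y h) \<le> 1"
  proof -
    have "(\<Sum>h\<in>seqs K T. sp h * Y h)
       = (1/2) * (1/real (card K)) * (\<Sum>\<tau>\<in>K. \<Sum>h\<in>seqs K T. sp h * exp (Xt \<tau> h))
         + (1/2) * (\<Sum>h\<in>seqs K T. sp h * exp (Xg h))"
    proof -
      have sw: "(\<Sum>h\<in>seqs K T. sp h * (\<Sum>\<tau>\<in>K. exp (Xt \<tau> h))) = (\<Sum>\<tau>\<in>K. \<Sum>h\<in>seqs K T. sp h * exp (Xt \<tau> h))"
        by (simp add: sum_distrib_left) (rule sum.swap)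
      have "(\<Sum>h\<in>seqs K T. sp h * Y h) = (\<Sum>h\<in>seqs K T. (1/2) * (1/real (card K)) * (sp h * (\<Sum>\<tau>\<in>K. exp (Xt \<tau> h))) + (1/2) * (sp h * exp (Xg h)))"
        by (intro sum.cong refl) (simp add: Y_def algebra_simps)
      also have "\<dots> = (1/2) * (1/real (card K)) * (\<Sum>h\<in>seqs K T. sp h * (\<Sum>\<tau>\<in>K. exp (Xt \<tau> h))) + (1/2) * (\<Sum>h\<in>seqs K T. sp h * exp (Xg h))"
        by (simp add: sum.distrib sum_distrib_left)
      finally show ?thesis by (simp only: sw)
    qed
    also have "\<dots> \<le> (1/2) * (1/real (card K)) * (\<Sum>\<tau>\<in>K. 1) + (1/2) * 1"
      using Et Eg cardK by (intro add_mono mult_left_mono sum_mono) auto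
    also have "\<dots> = 1" using cardK by simp
    finally show ?thesis .
  qed
  have Y0: "0 \<le> Y h" for h by (simp add: Y_def sum_nonneg)
  have good: "regret K lam \<alpha> F Cf T h \<le> B" if h: "h \<in> seqs K T" "Y h < 1/\<delta>" for h
  proof -
    have lh: "length h = T" and sh: "set h \<subseteq> K" using h(1) by (auto simp: seqs_def)
    have hn: "h ! n \<in> K" if "n < T" for n using that lh sh nth_mem by blast
    have cn: "0 \<le> Cf (take n h)" "Cf (take n h) \<le> 1" for n
      using adv[of "take n h"] sh set_take_subset[of n h] by auto
    define p where "p n = expw K \<eta> (cumL K \<eta> \<gamma> lam \<alpha> F Cf h n)" for n
    define l where "l n t = loss lam \<alpha> (F (take n h)) (Cf (take n h)) t" for n t
    define e where "e n t = est_loss K \<gamma> (p n) (loss lam \<alpha> (F (take n h)) (Cf (take n h))) (F (take n h)) (h ! n) t" for n t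
    define gg where "gg n = l n (h ! n) / (\<gamma> + sum (p n) (fbset K (F (take n h)) (h ! n)))" for n
    have Pp: "P (take n h) n = p n" if "n \<le> T" for n
      using that lh exaul_p_take[of n n h] by (simp add: P_def p_def exaul_p_def)
    have p0: "0 \<le> p n t" for n t by (simp add: p_def expw_nonneg)
    have psum: "sum (p n) K = 1" for n by (simp add: p_def expw_sum K(1) Kne)
    have lb: "0 \<le> l n t" "l n t \<le> 1" for n t using loss_bounds[OF lam cn al] by (auto simp: l_def)
    have e0: "0 \<le> e n t" for n t unfolding e_def
      using est_nonneg[OF g0, of K "p n"] p0 loss_bounds[OF lam cn al] by blast
    have Xt_eq: "Xt \<tau> h = 2 * \<gamma> * ((\<Sum>n<T. e n \<tau>) - (\<Sum>n<T. l n \<tau>))" for \<tau>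
    proof -
      have "Xt \<tau> h = (\<Sum>n<T. 2 * \<gamma> * (e n \<tau> - l n \<tau>))"
        unfolding Xt_def by (intro sum.cong refl) (simp add: Zt_def Pp e_def l_def)
      then show ?thesis by (simp add: sum_distrib_left[symmetric] sum_subtractf)
    qed
    have Xg_eq: "Xg h = 2 * \<gamma> * ((\<Sum>n<T. gg n) - (\<Sum>n<T. Ls lam \<alpha> (Cf (take n h))))"
    proof -
      have "Xg h = (\<Sum>n<T. 2 * \<gamma> * (gg n - Ls lam \<alpha> (Cf (take n h))))"
        unfolding Xg_def by (intro sum.cong refl) (simp add: Zg_def Pp gg_def l_def)
      then show ?thesis by (simp add: sum_distrib_left[symmetric] sum_subtractf)
    qed
    have si: "(\<Sum>t\<in>K. p n t * e n t) = l n (h ! n) - \<gamma> * gg n" if "n < T" for n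
      unfolding e_def gg_def l_def by (rule step_i[OF K(1) hn[OF that] p0 g0])
    have sii: "(\<Sum>t\<in>K. p n t * (e n t)^2) \<le> gg n" if "n < T" for n
      unfolding e_def gg_def l_def
      by (rule step_ii[OF K(1) hn[OF that] p0 g0 loss_bounds[OF lam cn al]])
    have SLs: "(\<Sum>n<T. Ls lam \<alpha> (Cf (take n h))) \<le> 2 * real T"
      using sum_mono[of "{..<T}" "\<lambda>n. Ls lam \<alpha> (Cf (take n h))" "\<lambda>n. 2"] Ls_le2[OF lam cn al] by simp
    define Sr where "Sr = (\<Sum>n<T. l n (h ! n))"
    define Sg where "Sg = (\<Sum>n<T. gg n)"
    define A where "A = (\<Sum>n<T. \<Sum>t\<in>K. p n t * e n t)"
    define Sb where "Sb = (\<Sum>n<T. \<Sum>t\<in>K. p n t * (e n t)^2)"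
    define SL where "SL = (\<Sum>n<T. Ls lam \<alpha> (Cf (take n h)))"
    have H3: "A = Sr - \<gamma> * Sg"
      unfolding A_def Sr_def Sg_def by (simp add: si sum_subtractf sum_distrib_left)
    have H2: "Sb \<le> Sg" unfolding Sb_def Sg_def by (intro sum_mono sii) auto
    obtain \<tau>0 where t0: "\<tau>0 \<in> K" and mn: "(MIN \<tau>\<in>K. \<Sum>n<T. l n \<tau>) = (\<Sum>n<T. l n \<tau>0)"
    proof -
      have "(MIN \<tau>\<in>K. \<Sum>n<T. l n \<tau>) \<in> (\<lambda>\<tau>. \<Sum>n<T. l n \<tau>) ` K"
        using K(1) Kne by (intro Min_in) auto
      then show ?thesis using that by auto
    qed
    define Se where "Se = (\<Sum>n<T. e n \<tau>0)"
    define Sl where "Sl = (\<Sum>n<T. l n \<tau>0)"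
    have H1: "\<eta> * A \<le> lk + \<eta> * Se + \<eta>^2/2 * Sb"
      unfolding A_def Se_def Sb_def lk_def p_def e_def
      by (rule hedge[OF K(1) Kne eta0 _ t0]) (use e0 in \<open>simp add: e_def p_def\<close>)
    have Yt: "(1/2) * (1/real (card K)) * exp (Xt \<tau>0 h) \<le> Y h"
    proof -
      have "exp (Xt \<tau>0 h) \<le> (\<Sum>\<tau>\<in>K. exp (Xt \<tau> h))" using K(1) t0 by (intro member_le_sum) auto
      then show ?thesis unfolding Y_def using cardK by (simp add: divide_right_mono add_increasing2)
    qed
    have "exp (Xt \<tau>0 h) < real (card K) * (2 / \<delta>)"
    proof -
      have a: "exp (Xt \<tau>0 h) \<le> Y h * (2 * real (card K))" using Yt cardK by (simp add: field_simps)
      have b: "\<delta> * Y h < 1" using h(2) del by (simp add: field_simps)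
      have "\<delta> * exp (Xt \<tau>0 h) \<le> (\<delta> * Y h) * (2 * real (card K))"
        using mult_left_mono[OF a, of \<delta>] del by (simp add: mult.assoc)
      also have "\<dots> < 1 * (2 * real (card K))" using b cardK by (intro mult_strict_right_mono) auto
      finally show ?thesis using del by (simp add: field_simps)
    qed
    then have "Xt \<tau>0 h < ln (real (card K) * (2 / \<delta>))"
      by (metis ln_exp ln_less_cancel_iff exp_gt_zero order.strict_trans)
    also have "\<dots> = lk + ld" unfolding lk_def ld_def using cardK del by (subst ln_mult) auto
    finally have H4: "2 * \<gamma> * (Se - Sl) < lk + ld" by (simp add: Xt_eq Se_def Sl_def)
    have "exp (Xg h) < 2 / \<delta>"
    proof -
      have "(1/2) * exp (Xg h) \<le> Y h" unfolding Y_def using cardK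
        by (simp add: sum_nonneg)
      then have a: "exp (Xg h) \<le> Y h * 2" by simp
      have b: "\<delta> * Y h < 1" using h(2) del by (simp add: field_simps)
      have "\<delta> * exp (Xg h) \<le> (\<delta> * Y h) * 2" using mult_left_mono[OF a, of \<delta>] del by (simp add: mult.assoc)
      also have "\<dots> < 2" using b by simp
      finally show ?thesis using del by (simp add: field_simps)
    qed
    then have "Xg h < ld" unfolding ld_def
      by (metis ln_exp ln_less_cancel_iff exp_gt_zero order.strict_trans)
    then have H5: "2 * \<gamma> * (Sg - SL) < ld" by (simp add: Xg_eq Sg_def SL_def)
    have H6: "SL \<le> 2 * real T" using SLs by (simp add: SL_def)
    have gm: "\<gamma> = \<eta> / 2" using gam by simp
    have H5': "\<eta> * Sg < ld + 2 * real T * \<eta>"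
    proof -
      have "\<eta> * Sg - \<eta> * SL < ld" using H5 gm by (simp add: algebra_simps)
      moreover have "\<eta> * SL \<le> \<eta> * (2 * real T)" using mult_left_mono[OF H6, of \<eta>] eta0 by simp
      ultimately show ?thesis by (simp add: algebra_simps)
    qed
    have H5'': "\<eta> * (\<eta> * Sg) \<le> \<eta> * (ld + 2 * real T * \<eta>)"
      using H5' eta0 by (intro mult_left_mono) auto
    have H2': "\<eta>^2/2 * Sb \<le> \<eta>^2/2 * Sg" using H2 by (intro mult_left_mono) auto
    have main: "\<eta> * (Sr - Sl) \<le> 2 * lk + 2 * real T * \<eta>^2 + ld + \<eta> * ld"
    proof -
      have "Sr = A + \<eta>/2 * Sg" using H3 gm by simp
      then have "\<eta> * (Sr - Sl) = \<eta> * A + \<eta>^2/2 * Sg - \<eta> * Sl" by (simp add: algebra_simps power2_eq_square)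
      also have "\<dots> \<le> lk + \<eta> * Se + \<eta>^2/2 * Sg + \<eta>^2/2 * Sg - \<eta> * Sl" using H1 H2' by linarith
      also have "\<dots> = lk + \<eta> * (Se - Sl) + \<eta> * (\<eta> * Sg)" by (simp add: algebra_simps power2_eq_square)
      also have "\<dots> \<le> lk + (lk + ld) + \<eta> * (ld + 2 * real T * \<eta>)"
        using H4 H5'' gm by (simp add: algebra_simps)
      also have "\<dots> = 2 * lk + 2 * real T * \<eta>^2 + ld + \<eta> * ld" by (simp add: algebra_simps power2_eq_square)
      finally show ?thesis .
    qed
    have "Sr - Sl \<le> 2 * lk / \<eta> + 2 * real T * \<eta> + ld / \<eta> + ld"
    proof -
      have "Sr - Sl \<le> (2 * lk + 2 * real T * \<eta>^2 + ld + \<eta> * ld) / \<eta>"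
        using main eta0 by (simp add: pos_le_divide_eq mult.commute)
      also have "\<dots> = 2 * lk / \<eta> + 2 * real T * \<eta> + ld / \<eta> + ld"
        using eta0 by (simp add: field_simps power2_eq_square)
      finally show ?thesis .
    qed
    also have "\<dots> = B" unfolding B_def
      by (rule bound_arith) (use T lk in \<open>auto simp: eta lk_def\<close>)
    finally have "Sr - Sl \<le> B" .
    moreover have "regret K lam \<alpha> F Cf T h = Sr - Sl"
      unfolding regret_def Sr_def Sl_def using mn by (simp add: l_def)
    ultimately show ?thesis by simp
  qed
  have "(\<Sum>h\<in>seqs K T. if regret K lam \<alpha> F Cf T h \<le> B then sp h else 0)
      \<ge> (\<Sum>h\<in>seqs K T. sp h - \<delta> * (sp h * Y h))"
  proof (intro sum_mono)
    fix h assume h: "h \<in> seqs K T"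
    have sp0: "0 \<le> sp h" by (simp add: sp_def seq_prob_nonneg)
    show "sp h - \<delta> * (sp h * Y h) \<le> (if regret K lam \<alpha> F Cf T h \<le> B then sp h else 0)"
    proof (cases "regret K lam \<alpha> F Cf T h \<le> B")
      case True then show ?thesis using sp0 Y0[of h] del by simp
    next
      case False
      then have "Y h \<ge> 1/\<delta>" using good[OF h] by force
      then have "\<delta> * Y h \<ge> 1" using del by (simp add: field_simps)
      then have "sp h * 1 \<le> sp h * (\<delta> * Y h)" using sp0 by (intro mult_left_mono) auto
      then show ?thesis using False by (simp add: algebra_simps)
    qed
  qed
  also have "(\<Sum>h\<in>seqs K T. sp h - \<delta> * (sp h * Y h)) = 1 - \<delta> * (\<Sum>h\<in>seqs K T. sp h * Y h)"
    using seq_prob_total[OF K(1) Kne] by (simp add: sp_def sum_subtractf sum_distrib_left)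
  finally have "1 - \<delta> * (\<Sum>h\<in>seqs K T. sp h * Y h) \<le> (\<Sum>h\<in>seqs K T. if regret K lam \<alpha> F Cf T h \<le> B then sp h else 0)" .
  moreover have "\<delta> * (\<Sum>h\<in>seqs K T. sp h * Y h) \<le> \<delta>" using EY del by (simp add: mult_left_le)
  ultimately have "1 - \<delta> \<le> (\<Sum>h\<in>seqs K T. if regret K lam \<alpha> F Cf T h \<le> B then sp h else 0)" by linarith
  then show ?thesis unfolding seqs_def B_def lk_def ld_def sp_def .
qed

theorem theorem4:
  fixes T H :: nat and \<alpha> lam \<delta> \<eta> \<gamma> :: real
    and f :: "'x \<Rightarrow> 'y \<Rightarrow> real" and G :: "'x \<Rightarrow> 'y"
    and X :: "real list \<Rightarrow> 'x" and C :: "real list \<Rightarrow> real"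
  assumes "0 < \<alpha>" "\<alpha> < 1" "lam \<ge> 0" "0 < \<delta>" "\<delta> < 1" "H \<ge> 2"
    and adv_f: "\<And>h. set h \<subseteq> grid H \<Longrightarrow> 0 \<le> f (X h) (G (X h)) \<and> f (X h) (G (X h)) < 1"
    and adv_c: "\<And>h. set h \<subseteq> grid H \<Longrightarrow> 0 \<le> C h \<and> C h \<le> 1"
    and eta: "\<eta> = sqrt (ln (real (card (grid H))) / real T)"
    and gamma: "\<eta> = 2 * \<gamma>"
  shows "(\<Sum>h\<in>{h. set h \<subseteq> grid H \<and> length h = T}.
            if regret (grid H) lam \<alpha> (\<lambda>h. f (X h) (G (X h))) C T h
               \<le> 4 * sqrt (real T * ln (real (card (grid H))))
                 + (1 + sqrt (real T / ln (real (card (grid H))))) * ln (2 / \<delta>)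
            then seq_prob (grid H) \<eta> \<gamma> lam \<alpha> (\<lambda>h. f (X h) (G (X h))) C T h
            else 0) \<ge> 1 - \<delta>"
proof -
  have inj: "inj_on (\<lambda>k. real k / real (H - 1)) {0..<H}"
    using assms(6) by (auto simp: inj_on_def)
  have cardK: "card (grid H) = H" unfolding grid_def using card_image[OF inj] by simp
  have finK: "finite (grid H)" by (simp add: grid_def)
  show ?thesis
  proof (cases "T = 0")
    case True
    have S: "{h. set h \<subseteq> grid H \<and> length h = T} = {[]}" using True by auto
    have Kne: "grid H \<noteq> {}" using cardK assms(6) by auto
    have img: "(\<lambda>\<tau>. \<Sum>n<T. loss lam \<alpha> (f (X (take n []))  (G (X (take n [])))) (C (take n [])) \<tau>) ` grid H = {0}"
      using True Kne by auto
    have reg: "regret (grid H) lam \<alpha> (\<lambda>h. f (X h) (G (X h))) C T [] = 0"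
      unfolding regret_def using img True by simp
    have "0 \<le> ln (2 / \<delta>)" using assms(4,5) by simp
    then show ?thesis using True S reg assms(4) by (simp add: seq_prob_def)
  next
    case False
    then show ?thesis
      using main_bound[OF finK _ _ assms(4,5) assms(3) _ _ adv_c eta gamma] cardK assms(1,2,6) by simp
  qed
qed

end
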